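(* Let $\mathcal H$ be a well-structured preconditioner set and $\{f_t\}_{t\in\mathcal T}$ a family of random differentiable functions $\mathbb R^d\to\mathbb R$. Then $$\sigma_{\|\cdot\|_{\mathcal H,*}}(\{f_t\}_{t\in\mathcal T})^2\le\sigma_{\mathcal H}(\{f_t\}_{t\in\mathcal T})^2\le d\cdot\sigma_{\|\cdot\|_{\mathcal H,*}}(\{f_t\}_{t\in\mathcal T})^2.$$
   Context: $\mathcal S^d_+$ (resp. $\mathcal S^d_{++}$) denotes the set of real symmetric positive semidefinite (resp. positive definite) $d\times d$ matrices. A set $\mathcal H\subseteq\mathcal S_+^d$ is a well-structured preconditioner set if $\mathcal H=\mathcal S_+^d\cap\mathcal K$ for some set $\mathcal K$ of real $d\times d$ matrices that is closed under scalar multiplication, matrix addition and matrix multiplication and contains the identity $I_d$. For $H\in\mathcal S_+^d$, $\|x\|_H=\sqrt{x^\top Hx}$; $\|x\|_{\mathcal H}:=\sup_{H\in\mathcal H,\operatorname{Tr}(H)\le1}\|x\|_H$ and $\|y\|_{\mathcal H,*}:=\sup_{\|x\|_{\mathcal H}\le1}\langle x,y\rangle$. For a norm $\|\cdot\|$: $\sigma_{\|\cdot\|}(\{f_t\})^2:=\sup_{t\in\mathcal T,x\in\mathbb R^d}\mathbb E\|\nabla f_t(x)-\mathbb E[\nabla f_t(x)]\|^2$. Adaptive gradient variance: $\sigma_{\mathcal H}(\{f_t\})^2:=\inf_{H\in\mathcal H\cap\mathcal S^d_{++},\operatorname{Tr}(H)\le1}\sup_{t\in\mathcal T,x\in\mathbb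 R^d}\mathbb E\|\nabla f_t(x)-\mathbb E[\nabla f_t(x)]\|_{H^{-1}}^2$. *)

theory Defs
  imports "HOL-Analysis.Analysis" "HOL-Probability.Probability"
begin

text \<open>Real d x d matrices: we use \<open>real^'n^'n\<close>, d = CARD('n).\<close>

definition psd_mat :: "real^'n^'n \<Rightarrow> bool" where
  "psd_mat H \<longleftrightarrow> transpose H = H \<and> (\<forall>x. 0 \<le> x \<bullet> (H *v x))"

definition pd_mat :: "real^'n^'n \<Rightarrow> bool" where
  "pd_mat H \<longleftrightarrow> transpose H = H \<and> (\<forall>x. x \<noteq> 0 \<longrightarrow> 0 < x \<bullet> (H *v x))"

definition well_structured :: "(real^'n^'n) set \<Rightarrow> bool" where
  "well_structured Hs \<longleftrightarrow> (\<exists>K.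
      (\<forall>c A. A \<in> K \<longrightarrow> c *\<^sub>R A \<in> K) \<and>
      (\<forall>A\<in>K. \<forall>B\<in>K. A + B \<in> K) \<and>
      (\<forall>A\<in>K. \<forall>B\<in>K. A ** B \<in> K) \<and>
      mat 1 \<in> K \<and>
      Hs = {H. psd_mat H} \<inter> K)"

definition Hnorm :: "real^'n^'n \<Rightarrow> real^'n \<Rightarrow> real" where
  "Hnorm H x = sqrt (x \<bullet> (H *v x))"

definition setnorm :: "(real^'n^'n) set \<Rightarrow> real^'n \<Rightarrow> real" where
  "setnorm Hs x = (SUP H\<in>{H\<in>Hs. trace H \<le> 1}. Hnorm H x)"

definition dualnorm :: "(real^'n^'n) set \<Rightarrow> real^'n \<Rightarrow> real" where
  "dualnorm Hs y = (SUP x\<in>{x. setnorm Hs x \<le> 1}. x \<bullet> y)"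

definition gradient :: "(real^'n \<Rightarrow> real) \<Rightarrow> real^'n \<Rightarrow> real^'n" where
  "gradient g x = (\<chi> i. frechet_derivative g (at x) (axis i 1))"

definition centred_grad ::
  "'w measure \<Rightarrow> ('t \<Rightarrow> 'w \<Rightarrow> real^'n \<Rightarrow> real) \<Rightarrow> 't \<Rightarrow> real^'n \<Rightarrow> 'w \<Rightarrow> real^'n" where
  "centred_grad M f t x \<omega> =
     gradient (f t \<omega>) x - (\<integral>\<omega>'. gradient (f t \<omega>') x \<partial>M)"

definition sigma_norm_sq ::
  "(real^'n \<Rightarrow> real) \<Rightarrow> 'w measure \<Rightarrow> ('t \<Rightarrow> 'w \<Rightarrow> real^'n \<Rightarrow> real) \<Rightarrow> 't set \<Rightarrow> ennreal" where
  "sigma_norm_sq N M f T =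
     (SUP p\<in>T \<times> UNIV. \<integral>\<^sup>+\<omega>. ennreal ((N (centred_grad M f (fst p) (snd p) \<omega>))\<^sup>2) \<partial>M)"

definition sigma_adaptive_sq ::
  "(real^'n^'n) set \<Rightarrow> 'w measure \<Rightarrow> ('t \<Rightarrow> 'w \<Rightarrow> real^'n \<Rightarrow> real) \<Rightarrow> 't set \<Rightarrow> ennreal" where
  "sigma_adaptive_sq Hs M f T =
     (INF H\<in>{H\<in>Hs. pd_mat H \<and> trace H \<le> 1}.
        SUP p\<in>T \<times> UNIV. \<integral>\<^sup>+\<omega>.
          ennreal (centred_grad M f (fst p) (snd p) \<omega> \<bullet>
                   (matrix_inv H *v centred_grad M f (fst p) (snd p) \<omega>)) \<partial>M)"

end

theory Submission
  imports Defs
begin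


lemma sym_form:
  fixes H :: "real^'n^'n"
  assumes "transpose H = H"
  shows "x \<bullet> (H *v y) = y \<bullet> (H *v x)"
proof -
  have "x \<bullet> (H *v y) = (x v* H) \<bullet> y" by (simp add: dot_lmul_matrix)
  also have "x v* H = transpose H *v x" by simp
  also have "\<dots> = H *v x" using assms by simp
  finally show ?thesis by (simp add: inner_commute)
qed

lemma psd_CS:
  fixes H :: "real^'n^'n"
  assumes "psd_mat H"
  shows "(x \<bullet> (H *v y))\<^sup>2 \<le> (x \<bullet> (H *v x)) * (y \<bullet> (H *v y))"
proof -
  have sym: "transpose H = H" and nn: "\<And>z. 0 \<le> z \<bullet> (H *v z)" using assms by (auto simp: psd_mat_def)
  define a where "a = x \<bullet> (H *v x)"
  define b where "b = x \<bullet> (H *v y)"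
  define c where "c = y \<bullet> (H *v y)"
  have q: "0 \<le> a - 2 * t * b + t\<^sup>2 * c" for t
  proof -
    have "0 \<le> (x - t *\<^sub>R y) \<bullet> (H *v (x - t *\<^sub>R y))" by (rule nn)
    also have "\<dots> = a - t * (y \<bullet> (H *v x)) - t * b + t\<^sup>2 * c"
      by (simp add: a_def b_def c_def algebra_simps inner_diff_left inner_diff_right power2_eq_square)
    also have "y \<bullet> (H *v x) = b" using sym_form[OF sym] b_def by simp
    finally show ?thesis by (simp add: algebra_simps)
  qed
  have c0: "0 \<le> c" using nn c_def by simp
  show ?thesis
  proof (cases "c = 0")
    case True
    have "b = 0"
    proof (rule ccontr)
      assume "b \<noteq> 0"
      have "0 \<le> a - 2 * ((a + 1) / (2 * b)) * b" using q[of "(a+1)/(2*b)"] True by simp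
      also have "\<dots> = -1" using \<open>b \<noteq> 0\<close> by (simp add: field_simps)
      finally show False by simp
    qed
    then show ?thesis using True a_def b_def c_def by simp
  next
    case False
    then have cp: "c > 0" using c0 by simp
    have "0 \<le> a - 2 * (b / c) * b + (b/c)\<^sup>2 * c" by (rule q)
    also have "\<dots> = a - b\<^sup>2 / c" using cp by (simp add: field_simps power2_eq_square)
    finally have "b\<^sup>2 / c \<le> a" by simp
    then have "b\<^sup>2 \<le> a * c" using cp by (simp add: field_simps)
    then show ?thesis by (simp add: a_def b_def c_def)
  qed
qed

lemma quad_expand:
  fixes H :: "real^'n^'n"
  shows "x \<bullet> (H *v x) = (\<Sum>i\<in>UNIV. \<Sum>j\<in>UNIV. x$i * x$j * (axis i 1 \<bullet> (H *v axis j 1)))"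
  by (simp add: inner_vec_def matrix_vector_mult_def sum_distrib_left axis_def algebra_simps
      if_distrib if_distribR sum.delta cong del: if_weak_cong)

lemma entry_eq: "axis i 1 \<bullet> ((H::real^'n^'n) *v axis j 1) = H$i$j"
proof -
  have "axis i 1 \<bullet> (H *v axis j 1) = (H *v axis j 1) $ i" by (simp add: inner_axis')
  also have "\<dots> = H$i$j" by (simp add: matrix_vector_mult_def axis_def if_distrib if_distribR sum.delta cong del: if_weak_cong)
  finally show ?thesis .
qed

lemma psd_trace_bound:
  fixes H :: "real^'n^'n"
  assumes "psd_mat H"
  shows "x \<bullet> (H *v x) \<le> trace H * (norm x)\<^sup>2"
proof -
  define h where "h i j = axis i 1 \<bullet> (H *v axis j 1)" for i j
  define s where "s i = sqrt (h i i)" for i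
  have hnn: "0 \<le> h i i" for i using assms by (simp add: psd_mat_def h_def)
  have hb: "\<bar>h i j\<bar> \<le> s i * s j" for i j
  proof -
    have "(h i j)\<^sup>2 \<le> h i i * h j j" unfolding h_def by (rule psd_CS[OF assms])
    then have "sqrt ((h i j)\<^sup>2) \<le> sqrt (h i i * h j j)" by (rule real_sqrt_le_mono)
    then show ?thesis by (simp add: s_def real_sqrt_mult)
  qed
  have "x \<bullet> (H *v x) = (\<Sum>i\<in>UNIV. \<Sum>j\<in>UNIV. x$i * x$j * h i j)"
    unfolding h_def by (rule quad_expand)
  also have "\<dots> \<le> (\<Sum>i\<in>UNIV. \<Sum>j\<in>UNIV. (\<bar>x$i\<bar> * s i) * (\<bar>x$j\<bar> * s j))"
  proof (intro sum_mono)
    fix i j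
    have "x$i * x$j * h i j \<le> \<bar>x$i * x$j * h i j\<bar>" by simp
    also have "\<dots> = \<bar>x$i\<bar> * \<bar>x$j\<bar> * \<bar>h i j\<bar>" by (simp add: abs_mult)
    also have "\<dots> \<le> \<bar>x$i\<bar> * \<bar>x$j\<bar> * (s i * s j)"
      by (intro mult_left_mono hb) simp
    finally show "x$i * x$j * h i j \<le> (\<bar>x$i\<bar> * s i) * (\<bar>x$j\<bar> * s j)" by (simp add: ac_simps)
  qed
  also have "\<dots> = (\<Sum>i\<in>UNIV. \<bar>x$i\<bar> * s i)\<^sup>2"
    by (simp add: power2_eq_square sum_product)
  also have "\<dots> \<le> (\<Sum>i\<in>UNIV. (\<bar>x$i\<bar>)\<^sup>2) * (\<Sum>i\<in>UNIV. (s i)\<^sup>2)"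
    by (rule Cauchy_Schwarz_ineq_sum)
  also have "(\<Sum>i\<in>UNIV. (\<bar>x$i\<bar>)\<^sup>2) = (norm x)\<^sup>2"
  proof -
    have "(norm x)\<^sup>2 = x \<bullet> x" by (rule power2_norm_eq_inner)
    then show ?thesis by (simp add: inner_vec_def power2_eq_square)
  qed
  also have "(\<Sum>i\<in>UNIV. (s i)\<^sup>2) = trace H"
    using hnn by (simp add: s_def trace_def h_def entry_eq)
  finally show ?thesis by (simp add: ac_simps)
qed

lemma Hnorm_le_norm:
  assumes "psd_mat H" "trace H \<le> 1"
  shows "Hnorm H x \<le> norm x"
proof -
  have "x \<bullet> (H *v x) \<le> trace H * (norm x)\<^sup>2" by (rule psd_trace_bound[OF assms(1)])
  also have "\<dots> \<le> 1 * (norm x)\<^sup>2" by (rule mult_right_mono[OF assms(2)]) simp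
  finally have "sqrt (x \<bullet> (H *v x)) \<le> sqrt ((norm x)\<^sup>2)" by (intro real_sqrt_le_mono) simp
  then show ?thesis by (simp add: Hnorm_def)
qed

lemma setnorm_le_norm:
  assumes "Hs \<subseteq> {H. psd_mat H}" "H0 \<in> Hs" "trace H0 \<le> 1"
  shows "setnorm Hs x \<le> norm x"
  unfolding setnorm_def
proof (rule cSUP_least)
  show "{H \<in> Hs. trace H \<le> 1} \<noteq> {}" using assms by blast
  fix H assume "H \<in> {H \<in> Hs. trace H \<le> 1}"
  then show "Hnorm H x \<le> norm x" using assms(1) by (intro Hnorm_le_norm) auto
qed

lemma Hnorm_le_setnorm:
  assumes "Hs \<subseteq> {H. psd_mat H}" "H \<in> Hs" "trace H \<le> 1"
  shows "Hnorm H x \<le> setnorm Hs x"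
  unfolding setnorm_def
proof (rule cSUP_upper)
  show "H \<in> {H \<in> Hs. trace H \<le> 1}" using assms by blast
  show "bdd_above ((\<lambda>H. Hnorm H x) ` {H \<in> Hs. trace H \<le> 1})"
    using assms(1) by (intro bdd_aboveI2[where M="norm x"] Hnorm_le_norm) auto
qed

lemma dual_bdd:
  fixes Hs :: "(real^'n^'n) set"
  assumes "Hs \<subseteq> {H. psd_mat H}" "H0 \<in> Hs" "trace H0 \<le> 1"
    and H0: "\<And>x. x \<bullet> (H0 *v x) = (x \<bullet> x) / real CARD('n)"
  shows "bdd_above ((\<lambda>x. x \<bullet> v) ` {x. setnorm Hs x \<le> 1})"
proof (rule bdd_aboveI2[where M="sqrt (real CARD('n)) * norm v"])
  fix x :: "real^'n" assume "x \<in> {x. setnorm Hs x \<le> 1}"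
  then have "Hnorm H0 x \<le> 1" using Hnorm_le_setnorm[OF assms(1-3), of x] by auto
  then have "sqrt ((x \<bullet> x) / real CARD('n)) \<le> 1" by (simp add: Hnorm_def H0)
  then have "(x \<bullet> x) / real CARD('n) \<le> 1" by simp
  then have "(norm x)\<^sup>2 \<le> real CARD('n)" by (simp add: power2_norm_eq_inner field_simps)
  then have nx: "norm x \<le> sqrt (real CARD('n))" using real_le_rsqrt by blast
  have "x \<bullet> v \<le> norm x * norm v" by (rule norm_cauchy_schwarz)
  also have "\<dots> \<le> sqrt (real CARD('n)) * norm v" by (rule mult_right_mono[OF nx]) simp
  finally show "x \<bullet> v \<le> sqrt (real CARD('n)) * norm v" .
qed

lemma norm_le_dual:
  fixes Hs :: "(real^'n^'n) set"
  assumes "Hs \<subseteq> {H. psd_mat H}" "H0 \<in> Hs" "trace H0 \<le> 1"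
    and H0: "\<And>x. x \<bullet> (H0 *v x) = (x \<bullet> x) / real CARD('n)"
  shows "norm v \<le> dualnorm Hs v"
proof -
  define u where "u = (if v = 0 then 0 else v /\<^sub>R norm v)"
  have "setnorm Hs u \<le> norm u" by (rule setnorm_le_norm[OF assms(1-3)])
  also have "norm u \<le> 1" by (simp add: u_def)
  finally have uin: "u \<in> {x. setnorm Hs x \<le> 1}" by simp
  have eq: "u \<bullet> v = norm v"
    by (simp add: u_def power2_norm_eq_inner[symmetric] power2_eq_square)
  have "u \<bullet> v \<le> dualnorm Hs v" unfolding dualnorm_def
    by (rule cSUP_upper[OF uin dual_bdd[OF assms]])
  then show ?thesis using eq by simp
qed

lemma pd_inv:
  fixes H :: "real^'n^'n"
  assumes "pd_mat H"
  shows "H *v (matrix_inv H *v v) = v"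
proof -
  have "\<forall>x. H *v x = 0 \<longrightarrow> x = 0"
  proof (intro allI impI)
    fix x assume "H *v x = 0"
    then have "x \<bullet> (H *v x) = 0" by simp
    then show "x = 0" using assms unfolding pd_mat_def by force
  qed
  then obtain B where "B ** H = mat 1" using matrix_left_invertible_ker by blast
  then have "H ** B = mat 1 \<and> B ** H = mat 1" using matrix_left_right_inverse by blast
  then have "H ** matrix_inv H = mat 1 \<and> matrix_inv H ** H = mat 1"
    unfolding matrix_inv_def by (rule someI)
  then show ?thesis by (simp add: matrix_vector_mul_assoc)
qed

lemma dual_le:
  fixes Hs :: "(real^'n^'n) set"
  assumes "Hs \<subseteq> {H. psd_mat H}" "H0 \<in> Hs" "trace H0 \<le> 1"
    and H0: "\<And>x. x \<bullet> (H0 *v x) = (x \<bullet> x) / real CARD('n)"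
    and H: "H \<in> Hs" "pd_mat H" "trace H \<le> 1"
  shows "(dualnorm Hs v)\<^sup>2 \<le> v \<bullet> (matrix_inv H *v v)"
proof -
  have psdH: "psd_mat H" using assms(1) H(1) by auto
  define y where "y = matrix_inv H *v v"
  have Hy: "H *v y = v" unfolding y_def by (rule pd_inv[OF H(2)])
  have "y \<bullet> (H *v y) = y \<bullet> v" by (simp only: Hy)
  then have q: "y \<bullet> (H *v y) = v \<bullet> (matrix_inv H *v v)"
    by (simp add: y_def inner_commute)
  have q0: "0 \<le> y \<bullet> (H *v y)" using psdH by (simp add: psd_mat_def)
  have "dualnorm Hs v \<le> sqrt (y \<bullet> (H *v y))" unfolding dualnorm_def
  proof (rule cSUP_least)
    have "setnorm Hs 0 \<le> norm (0::real^'n)" by (rule setnorm_le_norm[OF assms(1-3)])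
    then have "(0::real^'n) \<in> {x. setnorm Hs x \<le> 1}" by simp
    then show "{x. setnorm Hs x \<le> 1} \<noteq> {}" by blast
    fix x assume "x \<in> {x. setnorm Hs x \<le> 1}"
    then have "Hnorm H x \<le> 1" using Hnorm_le_setnorm[OF assms(1) H(1) H(3), of x] by auto
    then have x1: "x \<bullet> (H *v x) \<le> 1" by (simp add: Hnorm_def)
    have "(x \<bullet> v)\<^sup>2 = (x \<bullet> (H *v y))\<^sup>2" by (simp add: Hy)
    also have "\<dots> \<le> (x \<bullet> (H *v x)) * (y \<bullet> (H *v y))" by (rule psd_CS[OF psdH])
    also have "\<dots> \<le> 1 * (y \<bullet> (H *v y))" by (rule mult_right_mono[OF x1 q0])
    finally have "sqrt ((x \<bullet> v)\<^sup>2) \<le> sqrt (y \<bullet> (H *v y))" by (intro real_sqrt_le_mono) simp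
    then show "x \<bullet> v \<le> sqrt (y \<bullet> (H *v y))" by simp
  qed
  moreover have "0 \<le> dualnorm Hs v"
    using norm_le_dual[OF assms(1-4)] norm_ge_zero order_trans by blast
  ultimately have "(dualnorm Hs v)\<^sup>2 \<le> (sqrt (y \<bullet> (H *v y)))\<^sup>2" by (intro power_mono)
  also have "\<dots> = y \<bullet> (H *v y)" using q0 by simp
  finally show ?thesis using q by simp
qed

theorem proposition4p1:
  fixes Hs :: "(real^'n^'n) set"
    and M :: "'w measure"
    and f :: "'t \<Rightarrow> 'w \<Rightarrow> real^'n \<Rightarrow> real"
    and T :: "'t set"
  assumes "well_structured Hs"
    and "prob_space M"
    and "\<And>t \<omega> x. t \<in> T \<Longrightarrow> \<omega> \<in> space M \<Longrightarrow> f t \<omega> differentiable (at x)"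
    and "\<And>t x. t \<in> T \<Longrightarrow> integrable M (\<lambda>\<omega>. gradient (f t \<omega>) x)"
  shows "sigma_norm_sq (dualnorm Hs) M f T \<le> sigma_adaptive_sq Hs M f T
       \<and> sigma_adaptive_sq Hs M f T \<le> of_nat CARD('n) * sigma_norm_sq (dualnorm Hs) M f T"
proof -
  obtain K where K: "\<forall>c A. A \<in> K \<longrightarrow> c *\<^sub>R A \<in> K" "mat 1 \<in> K"
      and HsK: "Hs = {H. psd_mat H} \<inter> K"
    using assms(1) unfolding well_structured_def by blast
  have psd: "Hs \<subseteq> {H. psd_mat H}" using HsK by blast
  define d where "d = real CARD('n)"
  have dpos: "d > 0" by (simp add: d_def)
  define H0 :: "real^'n^'n" where "H0 = (1 / d) *\<^sub>R mat 1"
  have H0v: "H0 *v x = (1/d) *\<^sub>R x" for x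
    by (simp add: H0_def scaleR_matrix_vector_assoc[symmetric])
  have H0q: "x \<bullet> (H0 *v x) = (x \<bullet> x) / real CARD('n)" for x
    by (simp add: H0v d_def)
  have trH0: "trace H0 = 1"
    using dpos by (simp add: H0_def trace_def mat_def d_def)
  have tH0: "transpose H0 = H0"
    by (simp add: H0_def transpose_def mat_def vec_eq_iff)
  have pdH0: "pd_mat H0"
    unfolding pd_mat_def using tH0 dpos by (simp add: H0q d_def)
  have psdH0: "psd_mat H0"
    unfolding psd_mat_def using tH0 dpos by (simp add: H0q d_def)
  have H0Hs: "H0 \<in> Hs" using HsK K psdH0 by (simp add: H0_def)
  have trH0': "trace H0 \<le> 1" using trH0 by simp
  have invH0: "matrix_inv H0 = d *\<^sub>R mat 1"
  proof -
    have "H0 ** (d *\<^sub>R mat 1) = mat 1 \<and> (d *\<^sub>R mat 1) ** H0 = mat 1"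
      using dpos by (simp add: H0_def matrix_scalar_ac)
    then have "H0 ** matrix_inv H0 = mat 1 \<and> matrix_inv H0 ** H0 = mat 1"
      unfolding matrix_inv_def by (rule someI)
    then show ?thesis using \<open>H0 ** (d *\<^sub>R mat 1) = mat 1 \<and> _\<close>
      by (metis matrix_mul_assoc matrix_mul_lid matrix_mul_rid)
  qed
  have meas: "(\<lambda>\<omega>. centred_grad M f (fst p) (snd p) \<omega>) \<in> borel_measurable M" if "p \<in> T \<times> (UNIV :: (real^'n) set)" for p
    unfolding centred_grad_def
    using that by (intro borel_measurable_diff borel_measurable_integrable assms(4) borel_measurable_const) auto
  have part1: "sigma_norm_sq (dualnorm Hs) M f T \<le> sigma_adaptive_sq Hs M f T"
    unfolding sigma_norm_sq_def sigma_adaptive_sq_def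
  proof (rule INF_greatest)
    fix H assume H: "H \<in> {H\<in>Hs. pd_mat H \<and> trace H \<le> 1}"
    show "(SUP p\<in>T \<times> UNIV. \<integral>\<^sup>+\<omega>. ennreal ((dualnorm Hs (centred_grad M f (fst p) (snd p) \<omega>))\<^sup>2) \<partial>M)
       \<le> (SUP p\<in>T \<times> UNIV. \<integral>\<^sup>+\<omega>. ennreal (centred_grad M f (fst p) (snd p) \<omega> \<bullet> (matrix_inv H *v centred_grad M f (fst p) (snd p) \<omega>)) \<partial>M)"
    proof (rule SUP_mono)
      fix p :: "'t \<times> (real^'n)" assume p: "p \<in> T \<times> UNIV"
      have "(\<integral>\<^sup>+\<omega>. ennreal ((dualnorm Hs (centred_grad M f (fst p) (snd p) \<omega>))\<^sup>2) \<partial>M)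
         \<le> (\<integral>\<^sup>+\<omega>. ennreal (centred_grad M f (fst p) (snd p) \<omega> \<bullet> (matrix_inv H *v centred_grad M f (fst p) (snd p) \<omega>)) \<partial>M)"
        using H by (intro nn_integral_mono ennreal_leI dual_le[OF psd H0Hs trH0' H0q]) auto
      then show "\<exists>m\<in>T \<times> UNIV. (\<integral>\<^sup>+\<omega>. ennreal ((dualnorm Hs (centred_grad M f (fst p) (snd p) \<omega>))\<^sup>2) \<partial>M)
         \<le> (\<integral>\<^sup>+\<omega>. ennreal (centred_grad M f (fst m) (snd m) \<omega> \<bullet> (matrix_inv H *v centred_grad M f (fst m) (snd m) \<omega>)) \<partial>M)"
        using p by blast
    qed
  qed
  have H0set: "H0 \<in> {H\<in>Hs. pd_mat H \<and> trace H \<le> 1}" using H0Hs pdH0 trH0' by blast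
  have "sigma_adaptive_sq Hs M f T
     \<le> (SUP p\<in>T \<times> UNIV. \<integral>\<^sup>+\<omega>. ennreal (centred_grad M f (fst p) (snd p) \<omega> \<bullet> (matrix_inv H0 *v centred_grad M f (fst p) (snd p) \<omega>)) \<partial>M)"
    unfolding sigma_adaptive_sq_def by (rule INF_lower[OF H0set])
  also have "\<dots> = (SUP p\<in>T \<times> UNIV. \<integral>\<^sup>+\<omega>. ennreal (d * (norm (centred_grad M f (fst p) (snd p) \<omega>))\<^sup>2) \<partial>M)"
    by (simp add: invH0 scaleR_matrix_vector_assoc[symmetric] power2_norm_eq_inner)
  also have "\<dots> \<le> (SUP p\<in>T \<times> UNIV. ennreal d * \<integral>\<^sup>+\<omega>. ennreal ((dualnorm Hs (centred_grad M f (fst p) (snd p) \<omega>))\<^sup>2) \<partial>M)"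
  proof (rule SUP_mono)
    fix p :: "'t \<times> (real^'n)" assume p: "p \<in> T \<times> UNIV"
    have "(\<integral>\<^sup>+\<omega>. ennreal (d * (norm (centred_grad M f (fst p) (snd p) \<omega>))\<^sup>2) \<partial>M)
        = (\<integral>\<^sup>+\<omega>. ennreal d * ennreal ((norm (centred_grad M f (fst p) (snd p) \<omega>))\<^sup>2) \<partial>M)"
      using dpos by (simp add: ennreal_mult)
    also have "\<dots> = ennreal d * (\<integral>\<^sup>+\<omega>. ennreal ((norm (centred_grad M f (fst p) (snd p) \<omega>))\<^sup>2) \<partial>M)"
      using meas[OF p] by (intro nn_integral_cmult) measurable
    also have "\<dots> \<le> ennreal d * (\<integral>\<^sup>+\<omega>. ennreal ((dualnorm Hs (centred_grad M f (fst p) (snd p) \<omega>))\<^sup>2) \<partial>M)"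
      by (intro mult_left_mono nn_integral_mono ennreal_leI power_mono
          norm_le_dual[OF psd H0Hs trH0' H0q]) auto
    finally show "\<exists>m\<in>T \<times> UNIV. (\<integral>\<^sup>+\<omega>. ennreal (d * (norm (centred_grad M f (fst p) (snd p) \<omega>))\<^sup>2) \<partial>M)
         \<le> ennreal d * (\<integral>\<^sup>+\<omega>. ennreal ((dualnorm Hs (centred_grad M f (fst m) (snd m) \<omega>))\<^sup>2) \<partial>M)"
      using p by blast
  qed
  also have "\<dots> \<le> ennreal d * sigma_norm_sq (dualnorm Hs) M f T"
    unfolding sigma_norm_sq_def
    by (intro SUP_least mult_left_mono SUP_upper) auto
  also have "ennreal d = of_nat CARD('n)" by (simp add: d_def ennreal_of_nat_eq_real_of_nat)
  finally show ?thesis using part1 by simp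
qed

end
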